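(* Assume that in the extended Kalman filter all matrices $P_{t|t-1}$ and $R_t$ are invertible. Then the extended Kalman filter is equivalent to the recursion $$s_{t|t-1}\leftarrow f(s_{t-1},u_t),\quad F_{t-1}\leftarrow\frac{\partial f}{\partial s}\Big|_{(s_{t-1},u_t)},\quad P_{t|t-1}\leftarrow F_{t-1}P_{t-1}F_{t-1}^\top+Q_t,\quad \hat y_t\leftarrow h(s_{t|t-1},u_t),$$ $$P_t^{-1}\leftarrow P_{t|t-1}^{-1}+\mathbb E_{y\sim p_{\mathrm{obs}}(\cdot\mid\hat y_t)}\Big[\Big(\frac{\partial\ln p_{\mathrm{obs}}(y\mid\hat y_t)}{\partial s_{t|t-1}}\Big)^{\otimes2}\Big],\qquad s_t\leftarrow s_{t|t-1}+P_t\Big(\frac{\partial\ln p_{\mathrm{obs}}(y_t\mid\hat y_t)}{\partial s_{t|t-1}}\Big)^\top,$$ where derivatives with respect to $s_{t|t-1}$ are derivatives of $s\mapsto\ln p_{\mathrm{obs}}(y\mid h(s,u_t))$ at $s=s_{t|t-1}$.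
   Context: Conventions: Jacobian $\partial y/\partial x$ has $(i,j)$ entry $\partial f_i/\partial x_j$; gradients of real functions are row vectors; for a row vector $v$, $v^{\otimes2}=v^\top v$. Exponential family: $p_{\mathrm{obs}}(y\mid\hat y)$ denotes a family of densities $\frac{1}{Z(\beta)}\exp(\sum_k\beta_kT_k(y))\lambda(dy)$ (reference measure $\lambda$, linearly independent sufficient statistics $T$), parameterized by its mean parameter $\hat y=\mathbb{E}[T(y)]$. Dynamical system model: smooth $f,h$, inputs $u_t$, observations $y_t$, process noise covariances $Q_t$. Extended Kalman filter: maintains $s_t$ and covariance $P_t$, starting from $(s_0,P_0)$; for $t\ge1$: $s_{t|t-1}=f(s_{t-1},u_t)$, $F_{t-1}=\partial f/\partial s|_{(s_{t-1},u_t)}$, $P_{t|t-1}=F_{t-1}P_{t-1}F_{t-1}^\top+Q_t$, $\hat y_t=h(s_{t|t-1},u_t)$, $E_t=T(y_t)-\hat y_t$, $R_t=\mathrm{Cov}_{y\sim p_{\mathrm{obs}}(\cdot\mid\hat y_t)}(T(y))$, $H_t=\partial h/\partial s|_{(s_{t|t-1},u_t)}$, $K_t=P_{t|t-1}H_t^\top(H_tP_{t|t-1}H_t^\top+R_t)^{-1}$, $P_t=(\mathrm{Id}-K_tH_t)P_{t|t-1}$, $s_t=s_{t|t-1}+K_tE_t$. *)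

theory Defs
  imports "HOL-Analysis.Analysis"
begin

definition ef_natparams :: "('y \<Rightarrow> real^'m) \<Rightarrow> 'y measure \<Rightarrow> (real^'m) set" where
  "ef_natparams T lam = {\<beta>. integrable lam (\<lambda>y. exp (\<beta> \<bullet> T y))}"

definition ef_Z :: "('y \<Rightarrow> real^'m) \<Rightarrow> 'y measure \<Rightarrow> real^'m \<Rightarrow> real" where
  "ef_Z T lam \<beta> = (\<integral>y. exp (\<beta> \<bullet> T y) \<partial>lam)"

definition ef_dens :: "('y \<Rightarrow> real^'m) \<Rightarrow> 'y measure \<Rightarrow> real^'m \<Rightarrow> 'y \<Rightarrow> real" where
  "ef_dens T lam \<beta> y = exp (\<beta> \<bullet> T y) / ef_Z T lam \<beta>"

definition ef_mean :: "('y \<Rightarrow> real^'m) \<Rightarrow> 'y measure \<Rightarrow> real^'m \<Rightarrow> real^'m" where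
  "ef_mean T lam \<beta> = (\<integral>y. ef_dens T lam \<beta> y *\<^sub>R T y \<partial>lam)"

definition ef_meanparams :: "('y \<Rightarrow> real^'m) \<Rightarrow> 'y measure \<Rightarrow> (real^'m) set" where
  "ef_meanparams T lam = ef_mean T lam ` ef_natparams T lam"

definition ef_natparam_of :: "('y \<Rightarrow> real^'m) \<Rightarrow> 'y measure \<Rightarrow> real^'m \<Rightarrow> real^'m" where
  "ef_natparam_of T lam yh = (THE \<beta>. \<beta> \<in> ef_natparams T lam \<and> ef_mean T lam \<beta> = yh)"

definition p_obs :: "('y \<Rightarrow> real^'m) \<Rightarrow> 'y measure \<Rightarrow> 'y \<Rightarrow> real^'m \<Rightarrow> real" where
  "p_obs T lam y yh = ef_dens T lam (ef_natparam_of T lam yh) y"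

definition ef_cov :: "('y \<Rightarrow> real^'m) \<Rightarrow> 'y measure \<Rightarrow> real^'m \<Rightarrow> real^'m^'m" where
  "ef_cov T lam yh = (\<chi> i j. \<integral>y. p_obs T lam y yh * ((T y $ i - yh $ i) * (T y $ j - yh $ j)) \<partial>lam)"

definition lin_indep_stats :: "('y \<Rightarrow> real^'m) \<Rightarrow> 'y measure \<Rightarrow> bool" where
  "lin_indep_stats T lam = (\<forall>c. c \<noteq> 0 \<longrightarrow> \<not> (\<exists>k. AE y in lam. c \<bullet> T y = k))"

definition exp_family :: "('y \<Rightarrow> real^'m) \<Rightarrow> 'y measure \<Rightarrow> bool" where
  "exp_family T lam = (T \<in> borel_measurable lam \<and> lin_indep_stats T lam \<and> open (ef_natparams T lam))"

text \<open>Jacobian: (i,j) entry is d g_i / d x_j.\<close>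
definition jacobian :: "(real^'n \<Rightarrow> real^'k) \<Rightarrow> real^'n \<Rightarrow> real^'n^'k" where
  "jacobian g x = matrix (frechet_derivative g (at x))"

text \<open>Gradient of a real function (a row vector, stored as a vector).\<close>
definition grad :: "(real^'n \<Rightarrow> real) \<Rightarrow> real^'n \<Rightarrow> real^'n" where
  "grad g x = (\<chi> j. frechet_derivative g (at x) (axis j 1))"

text \<open>v^{(x)2} = v^T v for a row vector v.\<close>
definition outer_sq :: "real^'n \<Rightarrow> real^'n^'n" where
  "outer_sq v = (\<chi> i j. v $ i * v $ j)"

definition psd_cov :: "real^'n^'n \<Rightarrow> bool" where
  "psd_cov A = (transpose A = A \<and> (\<forall>x. 0 \<le> x \<bullet> (A *v x)))"

definition ekf_pred_state :: "(real^'n \<Rightarrow> 'u \<Rightarrow> real^'n) \<Rightarrow> (nat \<Rightarrow> 'u) \<Rightarrow> real^'n \<Rightarrow> nat \<Rightarrow> real^'n" where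
  "ekf_pred_state f u s t = f s (u t)"

definition ekf_pred_cov :: "(real^'n \<Rightarrow> 'u \<Rightarrow> real^'n) \<Rightarrow> (nat \<Rightarrow> real^'n^'n) \<Rightarrow> (nat \<Rightarrow> 'u)
    \<Rightarrow> real^'n \<Rightarrow> real^'n^'n \<Rightarrow> nat \<Rightarrow> real^'n^'n" where
  "ekf_pred_cov f Q u s P t =
     (let F = jacobian (\<lambda>x. f x (u t)) s in F ** P ** transpose F + Q t)"

definition ekf_yhat :: "(real^'n \<Rightarrow> 'u \<Rightarrow> real^'n) \<Rightarrow> (real^'n \<Rightarrow> 'u \<Rightarrow> real^'m) \<Rightarrow> (nat \<Rightarrow> 'u)
    \<Rightarrow> real^'n \<Rightarrow> nat \<Rightarrow> real^'m" where
  "ekf_yhat f h u s t = h (ekf_pred_state f u s t) (u t)"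

fun ekf :: "(real^'n \<Rightarrow> 'u \<Rightarrow> real^'n) \<Rightarrow> (real^'n \<Rightarrow> 'u \<Rightarrow> real^'m) \<Rightarrow> ('y \<Rightarrow> real^'m)
    \<Rightarrow> 'y measure \<Rightarrow> (nat \<Rightarrow> real^'n^'n) \<Rightarrow> (nat \<Rightarrow> 'u) \<Rightarrow> (nat \<Rightarrow> 'y)
    \<Rightarrow> real^'n \<Rightarrow> real^'n^'n \<Rightarrow> nat \<Rightarrow> (real^'n) \<times> (real^'n^'n)" where
  "ekf f h T lam Q u y s0 P0 0 = (s0, P0)"
| "ekf f h T lam Q u y s0 P0 (Suc t) =
     (let (s, P) = ekf f h T lam Q u y s0 P0 t;
          sp = ekf_pred_state f u s (Suc t);
          Pp = ekf_pred_cov f Q u s P (Suc t);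
          yh = h sp (u (Suc t));
          E = T (y (Suc t)) - yh;
          R = ef_cov T lam yh;
          H = jacobian (\<lambda>x. h x (u (Suc t))) sp;
          K = Pp ** transpose H ** matrix_inv (H ** Pp ** transpose H + R);
          P' = (mat 1 - K ** H) ** Pp
      in (sp + K *v E, P'))"

fun ekf_alt :: "(real^'n \<Rightarrow> 'u \<Rightarrow> real^'n) \<Rightarrow> (real^'n \<Rightarrow> 'u \<Rightarrow> real^'m) \<Rightarrow> ('y \<Rightarrow> real^'m)
    \<Rightarrow> 'y measure \<Rightarrow> (nat \<Rightarrow> real^'n^'n) \<Rightarrow> (nat \<Rightarrow> 'u) \<Rightarrow> (nat \<Rightarrow> 'y)
    \<Rightarrow> real^'n \<Rightarrow> real^'n^'n \<Rightarrow> nat \<Rightarrow> (real^'n) \<times> (real^'n^'n)" where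
  "ekf_alt f h T lam Q u y s0 P0 0 = (s0, P0)"
| "ekf_alt f h T lam Q u y s0 P0 (Suc t) =
     (let (s, P) = ekf_alt f h T lam Q u y s0 P0 t;
          sp = ekf_pred_state f u s (Suc t);
          Pp = ekf_pred_cov f Q u s P (Suc t);
          yh = h sp (u (Suc t));
          ll = (\<lambda>y' x. ln (p_obs T lam y' (h x (u (Suc t)))));
          G = (\<chi> i j. \<integral>y'. p_obs T lam y' yh * (outer_sq (grad (ll y') sp) $ i $ j) \<partial>lam);
          Pinv = matrix_inv Pp + G;
          P' = matrix_inv Pinv
      in (sp + P' *v grad (ll (y (Suc t))) sp, P'))"

end

theory Submission
  imports Defs
begin

lemma exp_taylor2: "\<bar>exp (x::real) - 1 - x\<bar> \<le> x\<^sup>2 * exp \<bar>x\<bar>"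
proof -
  obtain t where t: "\<bar>t\<bar> \<le> \<bar>x\<bar>" "exp x = (\<Sum>m<2. x^m / fact m) + exp t / fact 2 * x^2"
    using Maclaurin_exp_le[of x 2] by blast
  have e: "exp x - 1 - x = exp t / 2 * x^2" using t(2) by (simp add: numeral_2_eq_2)
  have le: "exp t \<le> exp \<bar>x\<bar>" using t(1) by simp
  have "\<bar>exp x - 1 - x\<bar> = exp t / 2 * x^2" unfolding e by (intro abs_of_nonneg) simp
  also have "\<dots> \<le> exp t * x^2" by (simp add: mult_right_mono)
  also have "\<dots> \<le> exp \<bar>x\<bar> * x^2" using le by (simp add: mult_right_mono)
  finally show ?thesis by (simp add: mult.commute)
qed

lemma pow_le_exp: assumes "0 \<le> (x::real)" "0 < r" shows "x^k \<le> fact k / r^k * exp (r*x)"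
proof -
  obtain t where t: "exp (r*x) = (\<Sum>m<Suc k. (r*x)^m / fact m) + exp t / fact (Suc k) * (r*x)^(Suc k)"
    using Maclaurin_exp_le[of "r*x" "Suc k"] by blast
  have "(r*x)^k / fact k \<le> (\<Sum>m<Suc k. (r*x)^m / fact m)"
    by (rule member_le_sum) (use assms in auto)
  also have "\<dots> \<le> exp (r*x)" using t assms by simp
  finally have "(r*x)^k \<le> fact k * exp (r*x)" by (simp add: field_simps)
  then have "r^k * x^k \<le> fact k * exp (r*x)" by (simp add: power_mult_distrib)
  then show ?thesis using assms by (simp add: field_simps)
qed

definition polyb :: "(real^'m \<Rightarrow> 'b::real_normed_vector) \<Rightarrow> bool" where
  "polyb g \<longleftrightarrow> continuous_on UNIV g \<and> (\<exists>c k. c \<ge> 0 \<and> (\<forall>x. norm (g x) \<le> c * (1 + norm x)^k))"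

lemma polyb_const[simp]: "polyb (\<lambda>x. c)"
  unfolding polyb_def by (intro conjI continuous_intros exI[of _ "norm c"] exI[of _ 0]) auto

lemma polyb_id[simp]: "polyb (\<lambda>x. x)"
  unfolding polyb_def by (intro conjI continuous_intros exI[of _ 1] exI[of _ 1]) auto

lemma polyb_add[simp]: assumes "polyb f" "polyb g" shows "polyb (\<lambda>x. f x + g x)"
proof -
  obtain c k where c: "c \<ge> 0" "\<forall>x. norm (f x) \<le> c * (1 + norm x)^k" using assms(1) polyb_def by blast
  obtain d l where d: "d \<ge> 0" "\<forall>x. norm (g x) \<le> d * (1 + norm x)^l" using assms(2) polyb_def by blast
  have "norm (f x + g x) \<le> (c+d) * (1 + norm x)^(k+l)" for x
  proof -
    have p1: "(1 + norm x)^k \<le> (1 + norm x)^(k+l)" "(1 + norm x)^l \<le> (1 + norm x)^(k+l)"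
      by (auto intro!: power_increasing)
    have "norm (f x + g x) \<le> c * (1 + norm x)^k + d * (1 + norm x)^l"
      using c d norm_triangle_ineq[of "f x" "g x"] by (smt (verit))
    also have "\<dots> \<le> c * (1 + norm x)^(k+l) + d * (1 + norm x)^(k+l)"
      using p1 c d by (intro add_mono mult_left_mono) auto
    finally show ?thesis by (simp add: algebra_simps)
  qed
  then show ?thesis using assms c d unfolding polyb_def
    by (intro conjI continuous_intros exI[of _ "c+d"] exI[of _ "k+l"]) auto
qed

lemma polyb_scaleR[simp]: assumes "polyb f" "polyb g" shows "polyb (\<lambda>x. f x *\<^sub>R g x)"
proof -
  obtain c k where c: "c \<ge> 0" "\<forall>x. norm (f x) \<le> c * (1 + norm x)^k" using assms(1) polyb_def by blast
  obtain d l where d: "d \<ge> 0" "\<forall>x. norm (g x) \<le> d * (1 + norm x)^l" using assms(2) polyb_def by blast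
  have "norm (f x *\<^sub>R g x) \<le> (c*d) * (1 + norm x)^(k+l)" for x
  proof -
    have "norm (f x *\<^sub>R g x) = \<bar>f x\<bar> * norm (g x)" by simp
    also have "\<dots> \<le> (c * (1 + norm x)^k) * (d * (1 + norm x)^l)"
      using c d by (intro mult_mono) auto
    finally show ?thesis by (simp add: algebra_simps power_add)
  qed
  then show ?thesis using assms c d unfolding polyb_def
    by (intro conjI continuous_intros exI[of _ "c*d"] exI[of _ "k+l"]) auto
qed

lemma polyb_inner[simp]: assumes "polyb f" "polyb g" shows "polyb (\<lambda>x. f x \<bullet> g x)"
proof -
  obtain c k where c: "c \<ge> 0" "\<forall>x. norm (f x) \<le> c * (1 + norm x)^k" using assms(1) polyb_def by blast
  obtain d l where d: "d \<ge> 0" "\<forall>x. norm (g x) \<le> d * (1 + norm x)^l" using assms(2) polyb_def by blast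
  have "norm (f x \<bullet> g x) \<le> (c*d) * (1 + norm x)^(k+l)" for x
  proof -
    have "norm (f x \<bullet> g x) \<le> norm (f x) * norm (g x)" using Cauchy_Schwarz_ineq2 by simp
    also have "\<dots> \<le> (c * (1 + norm x)^k) * (d * (1 + norm x)^l)"
      using c d by (intro mult_mono) auto
    finally show ?thesis by (simp add: algebra_simps power_add)
  qed
  then show ?thesis using assms c d unfolding polyb_def
    by (intro conjI continuous_intros exI[of _ "c*d"] exI[of _ "k+l"]) auto
qed

lemma polyb_minus[simp]: assumes "polyb f" shows "polyb (\<lambda>x. - f x)"
  using polyb_scaleR[OF polyb_const[of "-1"] assms] by simp

lemma polyb_diff[simp]: assumes "polyb f" "polyb g" shows "polyb (\<lambda>x. f x - g x)"
  using polyb_add[OF assms(1) polyb_minus[OF assms(2)]] by simp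

lemma polyb_mult[simp]: assumes "polyb f" "polyb (g :: _ \<Rightarrow> real)" shows "polyb (\<lambda>x. f x * g x)"
  using polyb_scaleR[OF assms] by simp

lemma polyb_comp_nth[simp]: "polyb (\<lambda>x. x $ i)"
proof -
  have "polyb (\<lambda>x. x \<bullet> axis i 1)" by simp
  then show ?thesis by (simp add: inner_axis)
qed

locale expfam =
  fixes T :: "'y \<Rightarrow> real^'m" and lam :: "'y measure"
  assumes fam: "exp_family T lam"
begin

abbreviation "NP \<equiv> ef_natparams T lam"

lemma Tmeas: "T \<in> borel_measurable lam" using fam exp_family_def by blast
lemma NP_open: "open NP" using fam exp_family_def by blast
lemma linind: "lin_indep_stats T lam" using fam exp_family_def by blast

lemma meas_comp: "continuous_on UNIV g \<Longrightarrow> (\<lambda>y. g (T y)) \<in> borel_measurable lam"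
  using measurable_compose[OF Tmeas borel_measurable_continuous_onI] by blast

lemma NP_int: "b \<in> NP \<Longrightarrow> integrable lam (\<lambda>y. exp (b \<bullet> T y))"
  by (simp add: ef_natparams_def)

lemma axis_inner1: "axis j (1::real) \<bullet> x = x $ j"
  by (simp add: inner_commute inner_axis)

lemma dom:
  assumes "\<beta> \<in> NP"
  obtains r where "r > 0" "\<And>h. norm h \<le> r \<Longrightarrow> \<beta> + h \<in> NP"
    "\<And>k. integrable lam (\<lambda>y. exp (\<beta> \<bullet> T y) * (1 + norm (T y))^k * exp (r * norm (T y)))"
proof -
  obtain e where e: "e > 0" "ball \<beta> e \<subseteq> NP" using NP_open assms open_contains_ball by blast
  define s where "s = e/2"
  define r where "r = s / (2 * real CARD('m))"
  have s: "s > 0" "s < e" using e s_def by auto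
  have r: "r > 0" "2 * r * real CARD('m) = s" using s r_def by auto
  have c1: "1 \<le> real CARD('m)" using zero_less_card_finite[where 'a='m] by linarith
  have r2: "r \<le> s" unfolding r_def using s apply (simp add: field_simps) using c1 by linarith
  have inNP: "\<beta> + v \<in> NP" if "norm v < e" for v
    using that e(2) by (auto simp: dist_norm subset_iff)
  have B: "integrable lam (\<lambda>y. \<Sum>i\<in>UNIV. exp ((\<beta> + s *\<^sub>R axis i 1) \<bullet> T y) + exp ((\<beta> + (- s) *\<^sub>R axis i 1) \<bullet> T y))"
  proof (intro Bochner_Integration.integrable_sum Bochner_Integration.integrable_add NP_int inNP)
    fix i show "norm (s *\<^sub>R axis i (1::real)) < e" "norm ((-s) *\<^sub>R axis i (1::real)) < e"
      using s by (auto simp: norm_axis_1)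
  qed
  have key: "exp (\<beta> \<bullet> x) * exp (2*r*norm x) \<le> (\<Sum>i\<in>UNIV. exp ((\<beta> + s *\<^sub>R axis i 1) \<bullet> x) + exp ((\<beta> + (- s) *\<^sub>R axis i 1) \<bullet> x))"
    for x :: "real^'m"
  proof -
    define M where "M = Max (range (\<lambda>i. \<bar>x $ i\<bar>))"
    have "M \<in> range (\<lambda>i. \<bar>x $ i\<bar>)" unfolding M_def by (intro Max_in) auto
    then obtain j where j: "M = \<bar>x $ j\<bar>" by auto
    have Mi: "\<bar>x $ i\<bar> \<le> M" for i unfolding M_def by (intro Max_ge) auto
    have "norm x \<le> (\<Sum>i\<in>UNIV. \<bar>x $ i\<bar>)" by (rule norm_le_l1_cart)
    also have "\<dots> \<le> real CARD('m) * M" using sum_bounded_above[of UNIV "\<lambda>i. \<bar>x $ i\<bar>" M] Mi by auto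
    finally have "2*r*norm x \<le> s * \<bar>x $ j\<bar>" using r j
      by (metis mult.assoc mult_left_mono less_eq_real_def zero_less_mult_iff zero_less_numeral)
    then have "exp (2*r*norm x) \<le> exp (s * \<bar>x $ j\<bar>)" by simp
    also have "\<dots> \<le> exp (s * x $ j) + exp ((-s) * x $ j)"
      by (cases "x $ j \<ge> 0") (auto simp: add_increasing2 add_increasing)
    finally have "exp (\<beta> \<bullet> x) * exp (2*r*norm x) \<le> exp (\<beta> \<bullet> x) * (exp (s * x $ j) + exp ((-s) * x $ j))"
      by simp
    also have "\<dots> = exp ((\<beta> + s *\<^sub>R axis j 1) \<bullet> x) + exp ((\<beta> + (- s) *\<^sub>R axis j 1) \<bullet> x)"
      by (simp add: inner_add_left inner_diff_left axis_inner1 distrib_left exp_add exp_diff exp_minus field_simps)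
    also have "\<dots> \<le> (\<Sum>i\<in>UNIV. exp ((\<beta> + s *\<^sub>R axis i 1) \<bullet> x) + exp ((\<beta> + (- s) *\<^sub>R axis i 1) \<bullet> x))"
      by (rule member_le_sum[where f="\<lambda>i. exp ((\<beta> + s *\<^sub>R axis i 1) \<bullet> x) + exp ((\<beta> + (- s) *\<^sub>R axis i 1) \<bullet> x)"]) auto
    finally show ?thesis .
  qed
  have I: "integrable lam (\<lambda>y. exp (\<beta> \<bullet> T y) * (1 + norm (T y))^k * exp (r * norm (T y)))" for k
  proof (rule Bochner_Integration.integrable_bound)
    define C where "C = fact k / r^k * exp r"
    show "integrable lam (\<lambda>y. C * (\<Sum>i\<in>UNIV. exp ((\<beta> + s *\<^sub>R axis i 1) \<bullet> T y) + exp ((\<beta> + (- s) *\<^sub>R axis i 1) \<bullet> T y)))"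
      using B by simp
    show "(\<lambda>y. exp (\<beta> \<bullet> T y) * (1 + norm (T y))^k * exp (r * norm (T y))) \<in> borel_measurable lam"
      by (rule meas_comp[where g="\<lambda>x. exp (\<beta> \<bullet> x) * (1 + norm x)^k * exp (r * norm x)"]) (intro continuous_intros)
    have C0: "C \<ge> 0" unfolding C_def using r by simp
    show "AE y in lam. norm (exp (\<beta> \<bullet> T y) * (1 + norm (T y))^k * exp (r * norm (T y)))
       \<le> norm (C * (\<Sum>i\<in>UNIV. exp ((\<beta> + s *\<^sub>R axis i 1) \<bullet> T y) + exp ((\<beta> + (- s) *\<^sub>R axis i 1) \<bullet> T y)))"
    proof (intro AE_I2)
      fix y
      let ?x = "T y"
      have "(1 + norm ?x)^k \<le> fact k / r^k * exp (r * (1 + norm ?x))"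
        by (rule pow_le_exp) (use r in auto)
      also have "\<dots> = C * exp (r * norm ?x)" unfolding C_def by (simp add: distrib_left exp_add)
      finally have "(1 + norm ?x)^k * exp (r * norm ?x) \<le> C * exp (r * norm ?x) * exp (r * norm ?x)"
        by (simp add: mult_right_mono)
      also have "\<dots> = C * exp (2 * r * norm ?x)" by (simp add: exp_add[symmetric] algebra_simps)
      finally have a: "exp (\<beta> \<bullet> ?x) * (1 + norm ?x)^k * exp (r * norm ?x) \<le> C * (exp (\<beta> \<bullet> ?x) * exp (2 * r * norm ?x))"
        by (simp add: mult.assoc mult.left_commute)
      also have "\<dots> \<le> C * (\<Sum>i\<in>UNIV. exp ((\<beta> + s *\<^sub>R axis i 1) \<bullet> ?x) + exp ((\<beta> + (- s) *\<^sub>R axis i 1) \<bullet> ?x))"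
        using key C0 by (intro mult_left_mono) auto
      finally show "norm (exp (\<beta> \<bullet> ?x) * (1 + norm ?x)^k * exp (r * norm ?x))
       \<le> norm (C * (\<Sum>i\<in>UNIV. exp ((\<beta> + s *\<^sub>R axis i 1) \<bullet> ?x) + exp ((\<beta> + (- s) *\<^sub>R axis i 1) \<bullet> ?x)))"
        using C0 by (simp add: abs_of_nonneg sum_nonneg)
    qed
  qed
  show ?thesis
  proof (rule that[OF r(1) _ I])
    fix h :: "real^'m" assume "norm h \<le> r" then show "\<beta> + h \<in> NP" using r2 s by (intro inNP) auto
  qed
qed

end

context expfam begin

lemma integrable_exp_poly:
  fixes g :: "real^'m \<Rightarrow> 'b::{banach,second_countable_topology}"
  assumes "\<beta> \<in> NP" "polyb g"
  shows "integrable lam (\<lambda>y. exp (\<beta> \<bullet> T y) *\<^sub>R g (T y))"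
proof -
  obtain r where r: "r>0" "\<And>k. integrable lam (\<lambda>y. exp (\<beta> \<bullet> T y) * (1 + norm (T y))^k * exp (r * norm (T y)))"
    using dom[OF assms(1)] by blast
  obtain c k where c: "c \<ge> 0" "\<forall>x. norm (g x) \<le> c * (1 + norm x)^k" and cont: "continuous_on UNIV g"
    using assms(2) polyb_def by blast
  show ?thesis
  proof (rule Bochner_Integration.integrable_bound)
    show "integrable lam (\<lambda>y. c * (exp (\<beta> \<bullet> T y) * (1 + norm (T y))^k * exp (r * norm (T y))))"
      using r(2) by simp
    show "(\<lambda>y. exp (\<beta> \<bullet> T y) *\<^sub>R g (T y)) \<in> borel_measurable lam"
      by (rule meas_comp[where g="\<lambda>x. exp (\<beta> \<bullet> x) *\<^sub>R g x"]) (intro continuous_intros cont)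
    show "AE y in lam. norm (exp (\<beta> \<bullet> T y) *\<^sub>R g (T y))
        \<le> norm (c * (exp (\<beta> \<bullet> T y) * (1 + norm (T y))^k * exp (r * norm (T y))))"
    proof (intro AE_I2)
      fix y let ?x = "T y"
      have e1: "1 \<le> exp (r * norm ?x)" using r by simp
      have "norm (exp (\<beta> \<bullet> ?x) *\<^sub>R g ?x) = exp (\<beta> \<bullet> ?x) * norm (g ?x)" by simp
      also have "\<dots> \<le> exp (\<beta> \<bullet> ?x) * (c * (1 + norm ?x)^k)" using c by (intro mult_left_mono) auto
      also have "\<dots> \<le> exp (\<beta> \<bullet> ?x) * (c * (1 + norm ?x)^k) * exp (r * norm ?x)"
        using mult_left_mono[OF e1, of "exp (\<beta> \<bullet> ?x) * (c * (1 + norm ?x)^k)"] c by simp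
      also have "\<dots> = norm (c * (exp (\<beta> \<bullet> ?x) * (1 + norm ?x)^k * exp (r * norm ?x)))"
        using c by (simp add: abs_mult)
      finally show "norm (exp (\<beta> \<bullet> ?x) *\<^sub>R g ?x) \<le> norm (c * (exp (\<beta> \<bullet> ?x) * (1 + norm ?x)^k * exp (r * norm ?x)))" .
    qed
  qed
qed

lemma Z_pos: assumes "\<beta> \<in> NP" shows "ef_Z T lam \<beta> > 0"
proof -
  have int: "integrable lam (\<lambda>y. exp (\<beta> \<bullet> T y))" using NP_int[OF assms] .
  have ge: "ef_Z T lam \<beta> \<ge> 0" by (simp add: ef_Z_def integral_nonneg_AE)
  have "ef_Z T lam \<beta> \<noteq> 0"
  proof
    assume "ef_Z T lam \<beta> = 0"
    then have "AE y in lam. exp (\<beta> \<bullet> T y) = 0"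
      using integral_nonneg_eq_0_iff_AE[OF int] by (simp add: ef_Z_def)
    then have F: "AE y in lam. False" by simp
    have nz: "axis undefined (1::real) \<noteq> (0::real^'m)"
      by (metis axis_nth zero_index zero_neq_one)
    have "AE y in lam. axis undefined 1 \<bullet> T y = 0" using F by (rule eventually_mono) auto
    then show False using linind nz unfolding lin_indep_stats_def by blast
  qed
  then show ?thesis using ge by simp
qed

lemma deriv_int:
  fixes g :: "real^'m \<Rightarrow> 'b::{banach,second_countable_topology}"
  assumes "\<beta> \<in> NP" "polyb g"
  shows "((\<lambda>b. \<integral>y. exp (b \<bullet> T y) *\<^sub>R g (T y) \<partial>lam) has_derivative
           (\<lambda>d. \<integral>y. exp (\<beta> \<bullet> T y) *\<^sub>R ((d \<bullet> T y) *\<^sub>R g (T y)) \<partial>lam)) (at \<beta>)"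
proof -
  obtain r where r: "r > 0" "\<And>h. norm h \<le> r \<Longrightarrow> \<beta> + h \<in> NP"
    "\<And>k. integrable lam (\<lambda>y. exp (\<beta> \<bullet> T y) * (1 + norm (T y))^k * exp (r * norm (T y)))"
    by (rule dom[OF assms(1)]) blast
  obtain c k where c: "c \<ge> 0" "\<forall>x. norm (g x) \<le> c * (1 + norm x)^k" and cont: "continuous_on UNIV g"
    using assms(2) polyb_def by blast
  define F where "F b = (\<integral>y. exp (b \<bullet> T y) *\<^sub>R g (T y) \<partial>lam)" for b
  define L where "L d = (\<integral>y. exp (\<beta> \<bullet> T y) *\<^sub>R ((d \<bullet> T y) *\<^sub>R g (T y)) \<partial>lam)" for d
  have pd: "polyb (\<lambda>x. (d \<bullet> x) *\<^sub>R g x)" for d using assms(2) by simp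
  have intL: "integrable lam (\<lambda>y. exp (\<beta> \<bullet> T y) *\<^sub>R ((d \<bullet> T y) *\<^sub>R g (T y)))" for d
    using integrable_exp_poly[OF assms(1) pd] .
  have lin: "linear L"
  proof (rule linearI)
    fix a b
    have "L (a + b) = (\<integral>y. exp (\<beta> \<bullet> T y) *\<^sub>R ((a \<bullet> T y) *\<^sub>R g (T y)) + exp (\<beta> \<bullet> T y) *\<^sub>R ((b \<bullet> T y) *\<^sub>R g (T y)) \<partial>lam)"
      unfolding L_def by (simp add: inner_add_left scaleR_add_left scaleR_add_right)
    also have "\<dots> = L a + L b" unfolding L_def by (rule Bochner_Integration.integral_add[OF intL intL])
    finally show "L (a + b) = L a + L b" .
  next
    fix s :: real and a :: "real^'m"
    have "L (s *\<^sub>R a) = (\<integral>y. s *\<^sub>R (exp (\<beta> \<bullet> T y) *\<^sub>R ((a \<bullet> T y) *\<^sub>R g (T y))) \<partial>lam)"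
      unfolding L_def by (simp add: scaleR_scaleR mult.commute mult.left_commute)
    also have "\<dots> = s *\<^sub>R L a" unfolding L_def by (rule integral_scaleR_right)
    finally show "L (s *\<^sub>R a) = s *\<^sub>R L a" .
  qed
  have bl: "bounded_linear L" using lin linear_conv_bounded_linear by blast
  define I where "I = (\<integral>y. exp (\<beta> \<bullet> T y) * (1 + norm (T y))^(k+2) * exp (r * norm (T y)) \<partial>lam)"
  define K where "K = c * I + 1"
  have I0: "I \<ge> 0" unfolding I_def by (intro integral_nonneg_AE) auto
  have cI: "c*I \<ge> 0" using c(1) I0 by simp
  have K: "K > 0" "c*I \<le> K" using cI unfolding K_def by auto
  have est: "norm (F (\<beta> + h) - F \<beta> - L h) \<le> norm h ^ 2 * (c * I)" if h: "norm h \<le> r" for h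
  proof -
    have intb: "integrable lam (\<lambda>y. exp ((\<beta> + h) \<bullet> T y) *\<^sub>R g (T y))"
      using integrable_exp_poly[OF r(2)[OF h] assms(2)] .
    have int0: "integrable lam (\<lambda>y. exp (\<beta> \<bullet> T y) *\<^sub>R g (T y))"
      using integrable_exp_poly[OF assms(1) assms(2)] .
    have pe: "\<And>y. exp ((\<beta> + h) \<bullet> T y) *\<^sub>R g (T y) - exp (\<beta> \<bullet> T y) *\<^sub>R g (T y) - exp (\<beta> \<bullet> T y) *\<^sub>R ((h \<bullet> T y) *\<^sub>R g (T y))
        = (exp (\<beta> \<bullet> T y) * (exp (h \<bullet> T y) - 1 - h \<bullet> T y)) *\<^sub>R g (T y)"
      by (simp add: inner_add_left exp_add algebra_simps)
    have intD: "integrable lam (\<lambda>y. exp ((\<beta> + h) \<bullet> T y) *\<^sub>R g (T y) - exp (\<beta> \<bullet> T y) *\<^sub>R g (T y) - exp (\<beta> \<bullet> T y) *\<^sub>R ((h \<bullet> T y) *\<^sub>R g (T y)))"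
      using intb int0 intL by auto
    then have intE: "integrable lam (\<lambda>y. (exp (\<beta> \<bullet> T y) * (exp (h \<bullet> T y) - 1 - h \<bullet> T y)) *\<^sub>R g (T y))"
      by (simp only: pe)
    have "F (\<beta>+h) - F \<beta> - L h = (\<integral>y. exp ((\<beta> + h) \<bullet> T y) *\<^sub>R g (T y) - exp (\<beta> \<bullet> T y) *\<^sub>R g (T y) - exp (\<beta> \<bullet> T y) *\<^sub>R ((h \<bullet> T y) *\<^sub>R g (T y)) \<partial>lam)"
      unfolding F_def L_def
      by (simp only: Bochner_Integration.integral_diff[OF Bochner_Integration.integrable_diff[OF intb int0] intL]
           Bochner_Integration.integral_diff[OF intb int0])
    also have "\<dots> = (\<integral>y. (exp (\<beta> \<bullet> T y) * (exp (h \<bullet> T y) - 1 - h \<bullet> T y)) *\<^sub>R g (T y) \<partial>lam)"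
      by (simp only: pe)
    finally have eq: "F (\<beta>+h) - F \<beta> - L h = (\<integral>y. (exp (\<beta> \<bullet> T y) * (exp (h \<bullet> T y) - 1 - h \<bullet> T y)) *\<^sub>R g (T y) \<partial>lam)" .
    have bnd: "norm ((exp (\<beta> \<bullet> x) * (exp (h \<bullet> x) - 1 - h \<bullet> x)) *\<^sub>R g x)
        \<le> norm h^2 * c * (exp (\<beta> \<bullet> x) * (1 + norm x)^(k+2) * exp (r * norm x))" for x
    proof -
      have a: "\<bar>h \<bullet> x\<bar> \<le> norm h * norm x" by (rule Cauchy_Schwarz_ineq2)
      have b: "\<bar>exp (h \<bullet> x) - 1 - h \<bullet> x\<bar> \<le> (h \<bullet> x)^2 * exp \<bar>h \<bullet> x\<bar>" by (rule exp_taylor2)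
      have c2: "(h \<bullet> x)^2 \<le> norm h^2 * norm x^2"
        using power_mono[OF a, of 2] by (simp add: power_mult_distrib)
      have "\<bar>h \<bullet> x\<bar> \<le> r * norm x" using a h by (meson mult_right_mono norm_ge_zero order_trans)
      then have d: "exp \<bar>h \<bullet> x\<bar> \<le> exp (r * norm x)" by simp
      have e: "norm x^2 * (1+norm x)^k \<le> (1+norm x)^(k+2)"
      proof -
        have "norm x^2 \<le> (1 + norm x)^2" by (intro power_mono) auto
        then have "norm x^2 * (1+norm x)^k \<le> (1 + norm x)^2 * (1+norm x)^k" by (intro mult_right_mono) auto
        moreover have "(1 + norm x)^2 * (1+norm x)^k = (1+norm x)^(k+2)" by (simp only: power_add mult.commute)
        ultimately show ?thesis by simp
      qed
      have "norm ((exp (\<beta> \<bullet> x) * (exp (h \<bullet> x) - 1 - h \<bullet> x)) *\<^sub>R g x)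
          = exp (\<beta> \<bullet> x) * (\<bar>exp (h \<bullet> x) - 1 - h \<bullet> x\<bar> * norm (g x))" by (simp add: abs_mult)
      also have "\<dots> \<le> exp (\<beta> \<bullet> x) * (((norm h^2 * norm x^2) * exp (r * norm x)) * (c * (1 + norm x)^k))"
      proof (intro mult_left_mono mult_mono)
        show "\<bar>exp (h \<bullet> x) - 1 - h \<bullet> x\<bar> \<le> norm h^2 * norm x^2 * exp (r * norm x)"
          using b c2 d by (meson exp_ge_zero mult_mono order_trans zero_le_power2)
      qed (use c in auto)
      also have "\<dots> = norm h^2 * c * (exp (\<beta> \<bullet> x) * (norm x^2 * (1+norm x)^k) * exp (r * norm x))"
        by (simp add: algebra_simps)
      also have "\<dots> \<le> norm h^2 * c * (exp (\<beta> \<bullet> x) * (1 + norm x)^(k+2) * exp (r * norm x))"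
        using e c by (intro mult_left_mono mult_right_mono) auto
      finally show ?thesis .
    qed
    have "norm (F (\<beta>+h) - F \<beta> - L h) \<le> (\<integral>y. norm ((exp (\<beta> \<bullet> T y) * (exp (h \<bullet> T y) - 1 - h \<bullet> T y)) *\<^sub>R g (T y)) \<partial>lam)"
      unfolding eq by (rule integral_norm_bound)
    also have "\<dots> \<le> (\<integral>y. norm h^2 * c * (exp (\<beta> \<bullet> T y) * (1 + norm (T y))^(k+2) * exp (r * norm (T y))) \<partial>lam)"
    proof (rule Bochner_Integration.integral_mono[OF integrable_norm[OF intE]])
      show "integrable lam (\<lambda>y. norm h^2 * c * (exp (\<beta> \<bullet> T y) * (1 + norm (T y))^(k+2) * exp (r * norm (T y))))"
        using r(3)[of "k+2"] by (rule integrable_mult_right)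
    qed (rule bnd)
    also have "\<dots> = norm h ^ 2 * (c * I)" unfolding I_def by simp
    finally show ?thesis .
  qed
  have "(F has_derivative L) (at \<beta>)"
    unfolding has_derivative_at_alt
  proof (intro conjI bl allI impI)
    fix e :: real assume e: "e > 0"
    show "\<exists>d>0. \<forall>y. norm (y - \<beta>) < d \<longrightarrow> norm (F y - F \<beta> - L (y - \<beta>)) \<le> e * norm (y - \<beta>)"
    proof (intro exI[of _ "min r (e/K)"] conjI allI impI)
      show "0 < min r (e/K)" using r K e by auto
      fix y assume y: "norm (y - \<beta>) < min r (e/K)"
      define h where "h = y - \<beta>"
      have hy: "y = \<beta> + h" unfolding h_def by simp
      have hr: "norm h \<le> r" using y h_def by auto
      have hK: "norm h * K \<le> e" using y K unfolding h_def by (simp add: field_simps)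
      have "norm (F y - F \<beta> - L h) \<le> norm h ^ 2 * (c * I)" using est[OF hr] hy by simp
      also have "\<dots> \<le> norm h * (norm h * K)"
        using mult_left_mono[OF K(2), of "norm h * norm h"] by (simp add: power2_eq_square mult.assoc)
      also have "\<dots> \<le> norm h * e" using hK by (simp add: mult_left_mono)
      finally show "norm (F y - F \<beta> - L (y - \<beta>)) \<le> e * norm (y - \<beta>)" unfolding h_def by (simp add: mult.commute)
    qed
  qed
  then show ?thesis unfolding F_def[abs_def] L_def[abs_def] .
qed

end

lemma inv_props: "invertible (A::real^'n^'n) \<Longrightarrow> A ** matrix_inv A = mat 1 \<and> matrix_inv A ** A = mat 1"
  unfolding invertible_def matrix_inv_def by (rule someI_ex)

context expfam begin

definition Eb :: "real^'m \<Rightarrow> (real^'m \<Rightarrow> 'b::{banach,second_countable_topology}) \<Rightarrow> 'b" where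
  "Eb \<beta> g = (\<integral>y. ef_dens T lam \<beta> y *\<^sub>R g (T y) \<partial>lam)"

lemma dens_eq: "ef_dens T lam \<beta> y *\<^sub>R (v::'b::real_vector) = (1 / ef_Z T lam \<beta>) *\<^sub>R (exp (\<beta> \<bullet> T y) *\<^sub>R v)"
  by (simp add: ef_dens_def)

lemma Eb_int: assumes "\<beta> \<in> NP" "polyb (g :: real^'m \<Rightarrow> 'b::{banach,second_countable_topology})"
  shows "integrable lam (\<lambda>y. ef_dens T lam \<beta> y *\<^sub>R g (T y))"
  unfolding dens_eq by (rule integrable_scaleR_right[OF integrable_exp_poly[OF assms]])

lemma Eb_eq: "Eb \<beta> g = (1 / ef_Z T lam \<beta>) *\<^sub>R (\<integral>y. exp (\<beta> \<bullet> T y) *\<^sub>R g (T y) \<partial>lam)"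
  unfolding Eb_def dens_eq by (rule integral_scaleR_right)

lemma Eb_add: assumes "\<beta> \<in> NP" "polyb f" "polyb g"
  shows "Eb \<beta> (\<lambda>x. f x + g x) = Eb \<beta> f + Eb \<beta> g"
  unfolding Eb_def scaleR_add_right by (rule Bochner_Integration.integral_add[OF Eb_int Eb_int]) (use assms in auto)

lemma Eb_diff: assumes "\<beta> \<in> NP" "polyb f" "polyb g"
  shows "Eb \<beta> (\<lambda>x. f x - g x) = Eb \<beta> f - Eb \<beta> g"
  unfolding Eb_def scaleR_diff_right by (rule Bochner_Integration.integral_diff[OF Eb_int Eb_int]) (use assms in auto)

lemma Eb_scale: "Eb \<beta> (\<lambda>x. c *\<^sub>R g x) = c *\<^sub>R Eb \<beta> g"
proof -
  have "\<And>y. ef_dens T lam \<beta> y *\<^sub>R (c *\<^sub>R g (T y)) = c *\<^sub>R (ef_dens T lam \<beta> y *\<^sub>R g (T y))"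
    by (simp add: scaleR_left_commute)
  then show ?thesis unfolding Eb_def by (simp only: integral_scaleR_right)
qed

lemma Eb_scaleR_const: assumes "\<beta> \<in> NP" "polyb (f :: real^'m \<Rightarrow> real)"
  shows "Eb \<beta> (\<lambda>x. f x *\<^sub>R v) = Eb \<beta> f *\<^sub>R v"
proof -
  have "\<And>y. ef_dens T lam \<beta> y *\<^sub>R (f (T y) *\<^sub>R v) = (ef_dens T lam \<beta> y *\<^sub>R f (T y)) *\<^sub>R v"
    by simp
  then show ?thesis unfolding Eb_def
    by (simp only: integral_scaleR_left[OF Eb_int[OF assms]])
qed

lemma Eb_inner: assumes "\<beta> \<in> NP" "polyb g"
  shows "Eb \<beta> (\<lambda>x. g x \<bullet> v) = Eb \<beta> g \<bullet> v"
proof -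
  have "\<And>y. ef_dens T lam \<beta> y *\<^sub>R (g (T y) \<bullet> v) = (ef_dens T lam \<beta> y *\<^sub>R g (T y)) \<bullet> v"
    by simp
  then show ?thesis unfolding Eb_def
    by (simp only: integral_inner_left[OF Eb_int[OF assms]])
qed

lemma Eb_const: assumes "\<beta> \<in> NP" shows "Eb \<beta> (\<lambda>x. v) = v"
proof -
  have Z: "ef_Z T lam \<beta> > 0" using Z_pos[OF assms] .
  have "(\<integral>y. exp (\<beta> \<bullet> T y) *\<^sub>R v \<partial>lam) = ef_Z T lam \<beta> *\<^sub>R v"
    unfolding ef_Z_def by (rule integral_scaleR_left[OF NP_int[OF assms]])
  then show ?thesis unfolding Eb_eq using Z by simp
qed

lemma Eb_sum: assumes "\<beta> \<in> NP" "\<And>j. polyb (f j)"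
  shows "Eb \<beta> (\<lambda>x. \<Sum>j\<in>A. f j x) = (\<Sum>j\<in>A. Eb \<beta> (f j))"
  unfolding Eb_def scaleR_sum_right by (rule Bochner_Integration.integral_sum[OF Eb_int[OF assms]])

lemma mean_Eb: "ef_mean T lam \<beta> = Eb \<beta> (\<lambda>x. x)"
  by (simp add: ef_mean_def Eb_def)

definition Cm :: "real^'m \<Rightarrow> real^'m^'m" where
  "Cm \<beta> = (\<chi> i j. \<integral>y. ef_dens T lam \<beta> y * ((T y $ i - ef_mean T lam \<beta> $ i) * (T y $ j - ef_mean T lam \<beta> $ j)) \<partial>lam)"

definition Cv :: "real^'m \<Rightarrow> real^'m \<Rightarrow> real^'m" where
  "Cv \<beta> d = Eb \<beta> (\<lambda>x. ((x - ef_mean T lam \<beta>) \<bullet> d) *\<^sub>R (x - ef_mean T lam \<beta>))"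

lemma Cm_Eb: "Cm \<beta> $ i $ j = Eb \<beta> (\<lambda>x. (x $ i - ef_mean T lam \<beta> $ i) * (x $ j - ef_mean T lam \<beta> $ j))"
  by (simp add: Cm_def Eb_def)

lemma Cm_sym: "transpose (Cm \<beta>) = Cm \<beta>"
  by (simp add: Cm_def transpose_def vec_eq_iff mult.commute)

lemma Cm_Cv: assumes "\<beta> \<in> NP" shows "Cm \<beta> *v d = Cv \<beta> d"
proof (subst vec_eq_iff, intro allI)
  fix i
  define m where "m = ef_mean T lam \<beta>"
  have "(Cm \<beta> *v d) $ i = (\<Sum>j\<in>UNIV. Cm \<beta> $ i $ j * d $ j)"
    by (simp add: matrix_vector_mult_def)
  also have "\<dots> = (\<Sum>j\<in>UNIV. Eb \<beta> (\<lambda>x. d $ j *\<^sub>R ((x $ i - m $ i) * (x $ j - m $ j))))"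
    unfolding Eb_scale Cm_Eb m_def by (simp add: mult.commute)
  also have "\<dots> = Eb \<beta> (\<lambda>x. \<Sum>j\<in>UNIV. d $ j *\<^sub>R ((x $ i - m $ i) * (x $ j - m $ j)))"
    by (rule Eb_sum[symmetric]) (use assms in simp_all)
  also have "\<dots> = Eb \<beta> (\<lambda>x. (((x - m) \<bullet> d) *\<^sub>R (x - m)) \<bullet> axis i 1)"
  proof -
    have "(\<Sum>j\<in>UNIV. d $ j *\<^sub>R ((x $ i - m $ i) * (x $ j - m $ j))) = (((x - m) \<bullet> d) *\<^sub>R (x - m)) \<bullet> axis i 1" for x
    proof -
      have a: "(((x - m) \<bullet> d) *\<^sub>R (x - m)) \<bullet> axis i 1 = ((x - m) \<bullet> d) * (x$i - m$i)"
        by (simp add: inner_axis)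
      have b: "(x - m) \<bullet> d = (\<Sum>j\<in>UNIV. (x$j - m$j) * d$j)"
        by (simp add: inner_vec_def inner_real_def)
      have "(((x - m) \<bullet> d) *\<^sub>R (x - m)) \<bullet> axis i 1 = (\<Sum>j\<in>UNIV. (x$j - m$j) * d$j) * (x$i - m$i)"
        unfolding a by (simp only: b)
      also have "\<dots> = (\<Sum>j\<in>UNIV. d $ j *\<^sub>R ((x $ i - m $ i) * (x $ j - m $ j)))"
        by (simp add: sum_distrib_left sum_distrib_right mult_ac)
      finally show ?thesis by simp
    qed
    then show ?thesis by simp
  qed
  also have "\<dots> = Cv \<beta> d \<bullet> axis i 1"
    unfolding Cv_def m_def by (rule Eb_inner) (use assms in simp_all)
  finally show "(Cm \<beta> *v d) $ i = Cv \<beta> d $ i" by (simp add: inner_axis)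
qed

lemma mean_deriv: assumes "\<beta> \<in> NP" shows "(ef_mean T lam has_derivative Cv \<beta>) (at \<beta>)"
proof -
  define Z where "Z = ef_Z T lam \<beta>"
  have Z: "Z > 0" unfolding Z_def using Z_pos[OF assms] .
  define m where "m = ef_mean T lam \<beta>"
  define N where "N b = (\<integral>y. exp (b \<bullet> T y) *\<^sub>R T y \<partial>lam)" for b
  have d1: "((\<lambda>b. \<integral>y. exp (b \<bullet> T y) *\<^sub>R (1::real) \<partial>lam) has_derivative (\<lambda>d. \<integral>y. exp (\<beta> \<bullet> T y) *\<^sub>R ((d \<bullet> T y) *\<^sub>R 1) \<partial>lam)) (at \<beta>)"
    by (rule deriv_int) (simp_all add: assms)
  have e1: "(\<lambda>b. \<integral>y. exp (b \<bullet> T y) *\<^sub>R (1::real) \<partial>lam) = ef_Z T lam" by (simp add: ef_Z_def fun_eq_iff)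
  have e2: "(\<lambda>d. \<integral>y. exp (\<beta> \<bullet> T y) *\<^sub>R ((d \<bullet> T y) *\<^sub>R (1::real)) \<partial>lam) = (\<lambda>d. Z * Eb \<beta> (\<lambda>x. d \<bullet> x))"
    using Z unfolding Eb_eq Z_def by (simp add: fun_eq_iff)
  have dZ: "(ef_Z T lam has_derivative (\<lambda>d. Z * Eb \<beta> (\<lambda>x. d \<bullet> x))) (at \<beta>)" using d1 unfolding e1 e2 .
  have d2: "((\<lambda>b. \<integral>y. exp (b \<bullet> T y) *\<^sub>R (T y) \<partial>lam) has_derivative (\<lambda>d. \<integral>y. exp (\<beta> \<bullet> T y) *\<^sub>R ((d \<bullet> T y) *\<^sub>R T y) \<partial>lam)) (at \<beta>)"
    using deriv_int[OF assms polyb_id] by simp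
  have e3: "(\<lambda>d. \<integral>y. exp (\<beta> \<bullet> T y) *\<^sub>R ((d \<bullet> T y) *\<^sub>R T y) \<partial>lam) = (\<lambda>d. Z *\<^sub>R Eb \<beta> (\<lambda>x. (d \<bullet> x) *\<^sub>R x))"
    using Z unfolding Eb_eq Z_def by (simp add: fun_eq_iff)
  have dN: "(N has_derivative (\<lambda>d. Z *\<^sub>R Eb \<beta> (\<lambda>x. (d \<bullet> x) *\<^sub>R x))) (at \<beta>)"
    using d2 unfolding e3 N_def[abs_def] .
  have dI: "((\<lambda>b. inverse (ef_Z T lam b)) has_derivative (\<lambda>d. - (inverse Z * (Z * Eb \<beta> (\<lambda>x. d \<bullet> x)) * inverse Z))) (at \<beta>)"
    using has_derivative_compose[OF dZ has_derivative_inverse'[of "ef_Z T lam \<beta>"]] Z unfolding Z_def by simp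
  have meq: "ef_mean T lam = (\<lambda>b. inverse (ef_Z T lam b) *\<^sub>R N b)"
  proof
    fix b
    have "ef_mean T lam b = Eb b (\<lambda>x. x)" by (rule mean_Eb)
    also have "\<dots> = inverse (ef_Z T lam b) *\<^sub>R N b" unfolding Eb_eq N_def by (simp add: divide_inverse)
    finally show "ef_mean T lam b = inverse (ef_Z T lam b) *\<^sub>R N b" .
  qed
  have mN: "m = inverse Z *\<^sub>R N \<beta>" unfolding m_def Z_def meq by simp
  have D: "(ef_mean T lam has_derivative (\<lambda>d. inverse Z *\<^sub>R (Z *\<^sub>R Eb \<beta> (\<lambda>x. (d \<bullet> x) *\<^sub>R x)) + (- (inverse Z * (Z * Eb \<beta> (\<lambda>x. d \<bullet> x)) * inverse Z)) *\<^sub>R N \<beta>)) (at \<beta>)"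
    unfolding meq Z_def using has_derivative_scaleR[OF dI dN] unfolding Z_def .
  have "inverse Z *\<^sub>R (Z *\<^sub>R Eb \<beta> (\<lambda>x. (d \<bullet> x) *\<^sub>R x)) + (- (inverse Z * (Z * Eb \<beta> (\<lambda>x. d \<bullet> x)) * inverse Z)) *\<^sub>R N \<beta>
      = Cv \<beta> d" for d
  proof -
    have Edx: "Eb \<beta> (\<lambda>x. d \<bullet> x) = m \<bullet> d"
      using Eb_inner[OF assms polyb_id, of d] unfolding m_def mean_Eb by (simp add: inner_commute)
    have L: "inverse Z *\<^sub>R (Z *\<^sub>R Eb \<beta> (\<lambda>x. (d \<bullet> x) *\<^sub>R x)) + (- (inverse Z * (Z * Eb \<beta> (\<lambda>x. d \<bullet> x)) * inverse Z)) *\<^sub>R N \<beta>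
       = Eb \<beta> (\<lambda>x. (d \<bullet> x) *\<^sub>R x) - (m \<bullet> d) *\<^sub>R m"
      using Z unfolding Edx mN by (simp add: algebra_simps)
    have pw: "((x - m) \<bullet> d) *\<^sub>R (x - m) = ((d \<bullet> x) *\<^sub>R x - (x \<bullet> d) *\<^sub>R m) - ((m \<bullet> d) *\<^sub>R x - (m \<bullet> d) *\<^sub>R m)" for x
      by (simp add: inner_diff_left scaleR_diff_left scaleR_diff_right inner_commute algebra_simps)
    have "Cv \<beta> d = Eb \<beta> (\<lambda>x. ((d \<bullet> x) *\<^sub>R x - (x \<bullet> d) *\<^sub>R m) - ((m \<bullet> d) *\<^sub>R x - (m \<bullet> d) *\<^sub>R m))"
      unfolding Cv_def m_def[symmetric] pw ..
    also have "\<dots> = (Eb \<beta> (\<lambda>x. (d \<bullet> x) *\<^sub>R x) - Eb \<beta> (\<lambda>x. (x \<bullet> d) *\<^sub>R m)) - (Eb \<beta> (\<lambda>x. (m \<bullet> d) *\<^sub>R x) - Eb \<beta> (\<lambda>x. (m \<bullet> d) *\<^sub>R m))"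
      using assms by (simp add: Eb_diff)
    also have "Eb \<beta> (\<lambda>x. (x \<bullet> d) *\<^sub>R m) = (m \<bullet> d) *\<^sub>R m"
      using Eb_scaleR_const[OF assms, of "\<lambda>x. x \<bullet> d" m] Edx by (simp add: inner_commute)
    also have "Eb \<beta> (\<lambda>x. (m \<bullet> d) *\<^sub>R x) = (m \<bullet> d) *\<^sub>R m" unfolding Eb_scale m_def mean_Eb ..
    also have "Eb \<beta> (\<lambda>x. (m \<bullet> d) *\<^sub>R m) = (m \<bullet> d) *\<^sub>R m" by (rule Eb_const[OF assms])
    finally show ?thesis using L by simp
  qed
  then show ?thesis using D by (simp add: fun_eq_iff)
qed

lemma Cv_pos: assumes "\<beta> \<in> NP" "d \<noteq> 0" shows "d \<bullet> Cv \<beta> d > 0"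
proof -
  define m where "m = ef_mean T lam \<beta>"
  have Z: "ef_Z T lam \<beta> > 0" using Z_pos[OF assms(1)] .
  have dpos: "ef_dens T lam \<beta> y > 0" for y using Z by (simp add: ef_dens_def)
  have "d \<bullet> Cv \<beta> d = Cv \<beta> d \<bullet> d" by (simp add: inner_commute)
  also have "\<dots> = Eb \<beta> (\<lambda>x. (((x - m) \<bullet> d) *\<^sub>R (x - m)) \<bullet> d)"
    unfolding Cv_def m_def by (rule Eb_inner[symmetric]) (use assms in simp_all)
  also have "\<dots> = (\<integral>y. ef_dens T lam \<beta> y * ((T y - m) \<bullet> d)^2 \<partial>lam)"
    unfolding Eb_def by (simp add: power2_eq_square)
  finally have eq: "d \<bullet> Cv \<beta> d = (\<integral>y. ef_dens T lam \<beta> y * ((T y - m) \<bullet> d)^2 \<partial>lam)" .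
  have int: "integrable lam (\<lambda>y. ef_dens T lam \<beta> y * ((T y - m) \<bullet> d)^2)"
    using Eb_int[OF assms(1), of "\<lambda>x. ((x - m) \<bullet> d) * ((x - m) \<bullet> d)"] by (simp add: power2_eq_square)
  have nn: "AE y in lam. 0 \<le> ef_dens T lam \<beta> y * ((T y - m) \<bullet> d)^2"
    using dpos by (simp add: less_imp_le)
  have "(\<integral>y. ef_dens T lam \<beta> y * ((T y - m) \<bullet> d)^2 \<partial>lam) \<noteq> 0"
  proof
    assume "(\<integral>y. ef_dens T lam \<beta> y * ((T y - m) \<bullet> d)^2 \<partial>lam) = 0"
    then have "AE y in lam. ef_dens T lam \<beta> y * ((T y - m) \<bullet> d)^2 = 0"
      using integral_nonneg_eq_0_iff_AE[OF int nn] by simp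
    then have "AE y in lam. d \<bullet> T y = d \<bullet> m"
    proof (rule eventually_mono)
      fix y assume "ef_dens T lam \<beta> y * ((T y - m) \<bullet> d)^2 = 0"
      then have "((T y - m) \<bullet> d)^2 = 0" using dpos[of y] by simp
      then have "(T y - m) \<bullet> d = 0" by simp
      then show "d \<bullet> T y = d \<bullet> m" by (simp add: inner_diff_left inner_diff_right inner_commute)
    qed
    then show False using linind assms(2) unfolding lin_indep_stats_def by blast
  qed
  moreover have "0 \<le> (\<integral>y. ef_dens T lam \<beta> y * ((T y - m) \<bullet> d)^2 \<partial>lam)"
    using nn by (rule integral_nonneg_AE)
  ultimately show ?thesis using eq by simp
qed

lemma Cm_invertible: assumes "\<beta> \<in> NP" shows "invertible (Cm \<beta>)"
proof -
  have "\<forall>x. Cm \<beta> *v x = 0 \<longrightarrow> x = 0"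
  proof (intro allI impI)
    fix x assume "Cm \<beta> *v x = 0"
    then have "x \<bullet> Cv \<beta> x = 0" using Cm_Cv[OF assms] by simp
    then show "x = 0" using Cv_pos[OF assms] by force
  qed
  then obtain B where "B ** Cm \<beta> = mat 1" using matrix_left_invertible_ker by blast
  then show ?thesis unfolding invertible_def using matrix_left_right_inverse by blast
qed

end

context expfam begin

lemma NP_convex: assumes "a \<in> NP" "b \<in> NP" "0 \<le> t" "t \<le> 1" shows "(1 - t) *\<^sub>R a + t *\<^sub>R b \<in> NP"
proof -
  have "integrable lam (\<lambda>y. exp (((1 - t) *\<^sub>R a + t *\<^sub>R b) \<bullet> T y))"
  proof (rule Bochner_Integration.integrable_bound)
    show "integrable lam (\<lambda>y. (1 - t) * exp (a \<bullet> T y) + t * exp (b \<bullet> T y))"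
      using NP_int[OF assms(1)] NP_int[OF assms(2)] by auto
    show "(\<lambda>y. exp (((1 - t) *\<^sub>R a + t *\<^sub>R b) \<bullet> T y)) \<in> borel_measurable lam"
      by (rule meas_comp[where g="\<lambda>x. exp (((1 - t) *\<^sub>R a + t *\<^sub>R b) \<bullet> x)"]) (intro continuous_intros)
    show "AE y in lam. norm (exp (((1 - t) *\<^sub>R a + t *\<^sub>R b) \<bullet> T y)) \<le> norm ((1 - t) * exp (a \<bullet> T y) + t * exp (b \<bullet> T y))"
    proof (intro AE_I2)
      fix y
      have "exp ((1 - t) *\<^sub>R (a \<bullet> T y) + t *\<^sub>R (b \<bullet> T y)) \<le> (1 - t) * exp (a \<bullet> T y) + t * exp (b \<bullet> T y)"
        by (rule convex_onD[OF exp_convex assms(3,4)]) auto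
      moreover have "0 \<le> (1 - t) * exp (a \<bullet> T y) + t * exp (b \<bullet> T y)" using assms(3,4) by simp
      ultimately show "norm (exp (((1 - t) *\<^sub>R a + t *\<^sub>R b) \<bullet> T y)) \<le> norm ((1 - t) * exp (a \<bullet> T y) + t * exp (b \<bullet> T y))"
        by (simp add: inner_add_left)
    qed
  qed
  then show ?thesis by (simp add: ef_natparams_def)
qed

lemma mean_inj: assumes "a \<in> NP" "b \<in> NP" "ef_mean T lam a = ef_mean T lam b" shows "a = b"
proof (rule ccontr)
  assume ne: "a \<noteq> b"
  define d where "d = b - a"
  have dnz: "d \<noteq> 0" using ne unfolding d_def by simp
  define \<phi> where "\<phi> t = ef_mean T lam (a + t *\<^sub>R d) \<bullet> d" for t
  have pt: "a + t *\<^sub>R d \<in> NP" if "0 \<le> t" "t \<le> 1" for t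
  proof -
    have "(1 - t) *\<^sub>R a + t *\<^sub>R b = a + t *\<^sub>R d" unfolding d_def by (simp add: algebra_simps)
    then show ?thesis using NP_convex[OF assms(1,2) that] by simp
  qed
  have "\<phi> 0 < \<phi> 1"
  proof (rule DERIV_pos_imp_increasing[of 0 1 \<phi>])
    fix t :: real assume t: "0 \<le> t" "t \<le> 1"
    let ?b = "a + t *\<^sub>R d"
    have lin: "((\<lambda>s. a + s *\<^sub>R d) has_derivative (\<lambda>s. s *\<^sub>R d)) (at t)"
      by (intro derivative_eq_intros) auto
    have D: "((\<lambda>s. ef_mean T lam (a + s *\<^sub>R d)) has_derivative (\<lambda>s. Cv ?b (s *\<^sub>R d))) (at t)"
      using has_derivative_compose[OF lin mean_deriv[OF pt[OF t]]] .
    have "linear (Cv ?b)" using mean_deriv[OF pt[OF t]] has_derivative_linear by blast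
    then have Cs: "Cv ?b (s *\<^sub>R d) = s *\<^sub>R Cv ?b d" for s by (simp add: linear_cmul)
    have "(\<phi> has_derivative (\<lambda>s. Cv ?b (s *\<^sub>R d) \<bullet> d)) (at t)"
      unfolding \<phi>_def[abs_def] using has_derivative_inner_left[OF D] .
    moreover have "(\<lambda>s. Cv ?b (s *\<^sub>R d) \<bullet> d) = (*) (d \<bullet> Cv ?b d)"
      using Cs by (simp add: fun_eq_iff inner_commute mult.commute)
    ultimately have "(\<phi> has_real_derivative (d \<bullet> Cv ?b d)) (at t)"
      unfolding has_field_derivative_def by simp
    moreover have "d \<bullet> Cv ?b d > 0" by (rule Cv_pos[OF pt[OF t] dnz])
    ultimately show "\<exists>y. (\<phi> has_real_derivative y) (at t) \<and> 0 < y" by blast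
  qed simp
  moreover have "\<phi> 0 = \<phi> 1" unfolding \<phi>_def d_def using assms(3) by simp
  ultimately show False by simp
qed

lemma natparam_of_mean: assumes "\<beta> \<in> NP" shows "ef_natparam_of T lam (ef_mean T lam \<beta>) = \<beta>"
  unfolding ef_natparam_of_def
proof (rule the_equality)
  show "\<beta> \<in> NP \<and> ef_mean T lam \<beta> = ef_mean T lam \<beta>" using assms by simp
  fix x assume "x \<in> NP \<and> ef_mean T lam x = ef_mean T lam \<beta>"
  then show "x = \<beta>" using mean_inj assms by blast
qed

lemma meanparam: assumes "yh \<in> ef_meanparams T lam"
  shows "ef_natparam_of T lam yh \<in> NP" "ef_mean T lam (ef_natparam_of T lam yh) = yh"
  using assms natparam_of_mean unfolding ef_meanparams_def by auto

lemma natparam_deriv: assumes "\<beta> \<in> NP"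
  shows "(ef_natparam_of T lam has_derivative (\<lambda>w. matrix_inv (Cm \<beta>) *v w)) (at (ef_mean T lam \<beta>))"
proof (rule has_derivative_inverse_strong[where S=NP and x=\<beta> and f="ef_mean T lam" and f'="Cv \<beta>"])
  show "open NP" by (rule NP_open)
  show "\<beta> \<in> NP" by (rule assms)
  show "continuous_on NP (ef_mean T lam)"
    by (rule has_derivative_continuous_on) (use mean_deriv in \<open>blast intro: has_derivative_at_withinI\<close>)
  show "\<And>x. x \<in> NP \<Longrightarrow> ef_natparam_of T lam (ef_mean T lam x) = x" by (rule natparam_of_mean)
  show "(ef_mean T lam has_derivative Cv \<beta>) (at \<beta>)" by (rule mean_deriv[OF assms])
  have inv: "Cm \<beta> ** matrix_inv (Cm \<beta>) = mat 1" using inv_props[OF Cm_invertible[OF assms]] by blast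
  show "Cv \<beta> \<circ> (\<lambda>w. matrix_inv (Cm \<beta>) *v w) = id"
    by (simp add: fun_eq_iff Cm_Cv[OF assms, symmetric] matrix_vector_mul_assoc inv)
qed

lemma Cinv_sym: assumes "\<beta> \<in> NP" shows "transpose (matrix_inv (Cm \<beta>)) = matrix_inv (Cm \<beta>)"
proof -
  let ?C = "Cm \<beta>" let ?M = "matrix_inv (Cm \<beta>)"
  have i: "?C ** ?M = mat 1" "?M ** ?C = mat 1" using inv_props[OF Cm_invertible[OF assms]] by auto
  have "transpose ?M ** ?C = mat 1"
    using arg_cong[OF i(1), of transpose] by (simp add: matrix_transpose_mul Cm_sym transpose_mat)
  then have "transpose ?M = transpose ?M ** (?C ** ?M)" using i by simp
  also have "\<dots> = ?M" by (simp add: matrix_mul_assoc \<open>transpose ?M ** ?C = mat 1\<close>)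
  finally show ?thesis .
qed

lemma Z_deriv: assumes "\<beta> \<in> NP"
  shows "(ef_Z T lam has_derivative (\<lambda>d. ef_Z T lam \<beta> * (ef_mean T lam \<beta> \<bullet> d))) (at \<beta>)"
proof -
  define Z where "Z = ef_Z T lam \<beta>"
  have Z: "Z > 0" unfolding Z_def using Z_pos[OF assms] .
  have d1: "((\<lambda>b. \<integral>y. exp (b \<bullet> T y) *\<^sub>R (1::real) \<partial>lam) has_derivative (\<lambda>d. \<integral>y. exp (\<beta> \<bullet> T y) *\<^sub>R ((d \<bullet> T y) *\<^sub>R 1) \<partial>lam)) (at \<beta>)"
    by (rule deriv_int) (simp_all add: assms)
  have e1: "(\<lambda>b. \<integral>y. exp (b \<bullet> T y) *\<^sub>R (1::real) \<partial>lam) = ef_Z T lam" by (simp add: ef_Z_def fun_eq_iff)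
  have e2: "(\<lambda>d. \<integral>y. exp (\<beta> \<bullet> T y) *\<^sub>R ((d \<bullet> T y) *\<^sub>R (1::real)) \<partial>lam) = (\<lambda>d. Z * Eb \<beta> (\<lambda>x. d \<bullet> x))"
    using Z unfolding Eb_eq Z_def by (simp add: fun_eq_iff)
  have Edx: "Eb \<beta> (\<lambda>x. d \<bullet> x) = ef_mean T lam \<beta> \<bullet> d" for d
    using Eb_inner[OF assms polyb_id, of d] unfolding mean_Eb by (simp add: inner_commute)
  show ?thesis using d1 unfolding e1 e2 Edx Z_def .
qed

lemma lnp_deriv: assumes "\<beta> \<in> NP"
  shows "((\<lambda>yh. ln (p_obs T lam y' yh)) has_derivative
          (\<lambda>w. (T y' - ef_mean T lam \<beta>) \<bullet> (matrix_inv (Cm \<beta>) *v w))) (at (ef_mean T lam \<beta>))"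
proof -
  define m where "m = ef_mean T lam \<beta>"
  define Ci where "Ci = matrix_inv (Cm \<beta>)"
  define g where "g = ef_natparam_of T lam"
  have gm: "g m = \<beta>" unfolding g_def m_def by (rule natparam_of_mean[OF assms])
  have dg: "(g has_derivative (\<lambda>w. Ci *v w)) (at m)" unfolding g_def m_def Ci_def by (rule natparam_deriv[OF assms])
  have Z: "ef_Z T lam \<beta> > 0" using Z_pos[OF assms] .
  have dlnZ: "((\<lambda>b. ln (ef_Z T lam b)) has_derivative (\<lambda>d. ef_Z T lam \<beta> * (m \<bullet> d) * inverse (ef_Z T lam \<beta>))) (at \<beta>)"
    using has_derivative_ln[OF Z Z_deriv[OF assms]] unfolding m_def .
  have e: "(\<lambda>d. ef_Z T lam \<beta> * (m \<bullet> d) * inverse (ef_Z T lam \<beta>)) = (\<lambda>d. m \<bullet> d)"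
    using Z by (simp add: fun_eq_iff)
  have dphi: "((\<lambda>b. b \<bullet> T y' - ln (ef_Z T lam b)) has_derivative (\<lambda>d. d \<bullet> T y' - m \<bullet> d)) (at (g m))"
    unfolding gm using has_derivative_diff[OF has_derivative_inner_left[OF has_derivative_ident] dlnZ[unfolded e]] .
  have dcomp: "((\<lambda>yh. g yh \<bullet> T y' - ln (ef_Z T lam (g yh))) has_derivative (\<lambda>w. (Ci *v w) \<bullet> T y' - m \<bullet> (Ci *v w))) (at m)"
    using has_derivative_compose[OF dg dphi] .
  have "continuous (at m) g" using has_derivative_continuous[OF dg] .
  then have "(g \<longlongrightarrow> \<beta>) (at m)" using gm by (simp add: continuous_at)
  then have ev: "\<forall>\<^sub>F yh in at m. g yh \<in> NP" using topological_tendstoD NP_open assms by blast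
  have eqn: "ln (p_obs T lam y' yh) = g yh \<bullet> T y' - ln (ef_Z T lam (g yh))" if "g yh \<in> NP" for yh
  proof -
    have "ef_Z T lam (g yh) > 0" using Z_pos[OF that] .
    then show ?thesis unfolding p_obs_def ef_dens_def g_def by (simp add: ln_div)
  qed
  have "((\<lambda>yh. ln (p_obs T lam y' yh)) has_derivative (\<lambda>w. (Ci *v w) \<bullet> T y' - m \<bullet> (Ci *v w))) (at m)"
  proof (rule has_derivative_transform_eventually[OF dcomp])
    show "\<forall>\<^sub>F yh in at m. g yh \<bullet> T y' - ln (ef_Z T lam (g yh)) = ln (p_obs T lam y' yh)"
      using ev by (rule eventually_mono) (simp add: eqn)
    show "g m \<bullet> T y' - ln (ef_Z T lam (g m)) = ln (p_obs T lam y' m)" using eqn[of m] gm assms by simp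
  qed simp
  moreover have "(\<lambda>w. (Ci *v w) \<bullet> T y' - m \<bullet> (Ci *v w)) = (\<lambda>w. (T y' - m) \<bullet> (Ci *v w))"
    by (simp add: fun_eq_iff inner_diff_left inner_diff_right inner_commute)
  ultimately show ?thesis unfolding m_def Ci_def by simp
qed

end

lemma inv_props2: "invertible (A::real^'n^'n) \<Longrightarrow> A ** matrix_inv A = mat 1 \<and> matrix_inv A ** A = mat 1"
  unfolding invertible_def matrix_inv_def by (rule someI_ex)

lemma mm_diff_l: "(A::real^'n^'m) ** (B - C) = A ** B - A ** C"
  by (simp add: matrix_matrix_mult_def vec_eq_iff sum_subtractf algebra_simps)
lemma mm_diff_r: "((A::real^'n^'m) - B) ** C = A ** C - B ** C"
  by (simp add: matrix_matrix_mult_def vec_eq_iff sum_subtractf algebra_simps)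
lemma mm_add_r: "((A::real^'n^'m) + B) ** C = A ** C + B ** C"
  by (simp add: matrix_matrix_mult_def vec_eq_iff sum.distrib algebra_simps)
lemma transpose_add: "transpose ((A::real^'n^'m) + B) = transpose A + transpose B"
  by (simp add: transpose_def vec_eq_iff)

lemma inner_mv: "x \<bullet> ((A::real^'n^'m) *v y) = (transpose A *v x) \<bullet> y"
  by (simp add: transpose_matrix_vector dot_lmul_matrix)

lemma sym_inner: "transpose (A::real^'n^'n) = A \<Longrightarrow> (A *v x) \<bullet> y = x \<bullet> (A *v y)"
  by (metis inner_commute inner_mv)

lemma left_inv_inv: assumes "(B::real^'n^'n) ** A = mat 1" shows "invertible A" "matrix_inv A = B"
proof -
  have "A ** B = mat 1" using assms matrix_left_right_inverse by blast
  then show inv: "invertible A" unfolding invertible_def using assms by blast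
  have "matrix_inv A = (B ** A) ** matrix_inv A" using assms by simp
  also have "\<dots> = B" using inv_props2[OF inv] by (simp add: matrix_mul_assoc[symmetric])
  finally show "matrix_inv A = B" .
qed

lemma pd_invertible: assumes "\<forall>x. x \<noteq> 0 \<longrightarrow> 0 < x \<bullet> ((A::real^'n^'n) *v x)" shows "invertible A"
proof -
  have "\<forall>x. A *v x = 0 \<longrightarrow> x = 0" using assms by force
  then obtain B where "B ** A = mat 1" using matrix_left_invertible_ker by blast
  then show ?thesis using left_inv_inv by blast
qed

lemma psd_inv: assumes "psd_cov (J::real^'n^'n)" "J ** P = mat 1" shows "psd_cov P"
proof -
  have Js: "transpose J = J" using assms(1) psd_cov_def by blast
  have PJ: "P ** J = mat 1" using assms(2) matrix_left_right_inverse by blast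
  have "transpose P ** J = mat 1"
    using arg_cong[OF assms(2), of transpose] Js by (simp add: matrix_transpose_mul transpose_mat)
  then have Ps: "transpose P = P"
    by (metis assms(2) matrix_mul_assoc matrix_mul_lid matrix_mul_rid)
  have "0 \<le> x \<bullet> (P *v x)" for x
  proof -
    have "x = J *v (P *v x)" using assms(2) by (simp add: matrix_vector_mul_assoc)
    then have "x \<bullet> (P *v x) = (J *v (P *v x)) \<bullet> (P *v x)" by simp
    also have "\<dots> = (P *v x) \<bullet> (J *v (P *v x))" by (simp add: inner_commute)
    finally show ?thesis using assms(1) psd_cov_def by auto
  qed
  then show ?thesis using Ps psd_cov_def by blast
qed

lemma psd_pred: assumes "psd_cov (P::real^'n^'n)" "psd_cov Q" shows "psd_cov (F ** P ** transpose F + Q)"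
proof -
  have Ps: "transpose P = P" "transpose Q = Q" using assms psd_cov_def by auto
  have "transpose (F ** P ** transpose F + Q) = F ** P ** transpose F + Q"
    by (simp add: transpose_add matrix_transpose_mul Ps matrix_mul_assoc)
  moreover have "0 \<le> x \<bullet> ((F ** P ** transpose F + Q) *v x)" for x
  proof -
    have "x \<bullet> ((F ** P ** transpose F + Q) *v x) = (transpose F *v x) \<bullet> (P *v (transpose F *v x)) + x \<bullet> (Q *v x)"
      by (simp add: matrix_vector_mult_add_rdistrib inner_add_right matrix_vector_mul_assoc[symmetric] inner_mv)
    then show ?thesis using assms psd_cov_def by (smt (verit))
  qed
  ultimately show ?thesis unfolding psd_cov_def by blast
qed

lemma kalman_info:
  fixes Pp :: "real^'n^'n" and H :: "real^'n^'m" and R :: "real^'m^'m"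
  assumes Pp: "psd_cov Pp" "invertible Pp"
    and R: "transpose R = R" "\<forall>x. x \<noteq> 0 \<longrightarrow> 0 < x \<bullet> (R *v x)"
  defines "S \<equiv> H ** Pp ** transpose H + R"
  defines "K \<equiv> Pp ** transpose H ** matrix_inv S"
  defines "P \<equiv> (mat 1 - K ** H) ** Pp"
  defines "J \<equiv> matrix_inv Pp + transpose H ** matrix_inv R ** H"
  shows "matrix_inv J = P" "K = P ** transpose H ** matrix_inv R" "psd_cov P"
proof -
  define M where "M = transpose H"
  define Pi where "Pi = matrix_inv Pp"
  define Ri where "Ri = matrix_inv R"
  define Si where "Si = matrix_inv S"
  have Ppi: "Pp ** Pi = mat 1" "Pi ** Pp = mat 1" using inv_props2[OF Pp(2)] unfolding Pi_def by auto
  have Rinv: "invertible R" using pd_invertible[OF R(2)] .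
  have Rri: "R ** Ri = mat 1" "Ri ** R = mat 1" using inv_props2[OF Rinv] unfolding Ri_def by auto
  have Sinv: "invertible S"
  proof (rule pd_invertible, intro allI impI)
    fix x :: "real^'m" assume x: "x \<noteq> 0"
    have "x \<bullet> (S *v x) = (M *v x) \<bullet> (Pp *v (M *v x)) + x \<bullet> (R *v x)"
      unfolding S_def M_def
      by (simp add: matrix_vector_mult_add_rdistrib inner_add_right matrix_vector_mul_assoc[symmetric] inner_mv)
    moreover have "0 \<le> (M *v x) \<bullet> (Pp *v (M *v x))" using Pp(1) psd_cov_def by blast
    ultimately show "0 < x \<bullet> (S *v x)" using R(2) x by (smt (verit))
  qed
  have Ssi: "S ** Si = mat 1" "Si ** S = mat 1" using inv_props2[OF Sinv] unfolding Si_def by auto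
  have HPM: "H ** Pp ** M = S - R" unfolding S_def M_def by simp
  have K': "K = Pp ** M ** Si" unfolding K_def M_def Si_def ..
  have J': "J = Pi + M ** Ri ** H" unfolding J_def Pi_def M_def Ri_def ..
  have JK: "J ** K = M ** Ri"
  proof -
    have "J ** K = Pi ** Pp ** M ** Si + M ** Ri ** (H ** Pp ** M) ** Si"
      unfolding J' K' by (simp add: mm_add_r matrix_mul_assoc)
    also have "\<dots> = M ** Si + (M ** Ri ** S - M ** (Ri ** R)) ** Si"
      unfolding HPM by (simp add: Ppi mm_diff_l matrix_mul_assoc)
    also have "\<dots> = M ** Si + M ** Ri ** (S ** Si) - M ** Si"
      by (simp add: Rri mm_diff_r matrix_mul_assoc)
    also have "\<dots> = M ** Ri" by (simp add: Ssi)
    finally show ?thesis .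
  qed
  have JP: "J ** P = mat 1"
  proof -
    have "J ** P = J ** Pp - (J ** K) ** H ** Pp"
      unfolding P_def by (simp add: mm_diff_r mm_diff_l matrix_mul_assoc)
    also have "J ** Pp = mat 1 + M ** Ri ** H ** Pp"
      unfolding J' by (simp add: mm_add_r Ppi)
    finally show ?thesis unfolding JK by (simp add: matrix_mul_assoc)
  qed
  show JinvP: "matrix_inv J = P"
  proof -
    have "P ** J = mat 1" using JP matrix_left_right_inverse by blast
    then show ?thesis using left_inv_inv(2) by blast
  qed
  have PJ: "P ** J = mat 1" using JP matrix_left_right_inverse by blast
  show "K = P ** transpose H ** matrix_inv R"
  proof -
    have "K = P ** (J ** K)" using PJ by (simp add: matrix_mul_assoc)
    also have "\<dots> = P ** transpose H ** matrix_inv R" unfolding JK M_def Ri_def by (simp add: matrix_mul_assoc)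
    finally show ?thesis .
  qed
  have Pps: "transpose Pp = Pp" using Pp(1) psd_cov_def by blast
  have Pis: "transpose Pi = Pi"
  proof -
    have "transpose Pi ** Pp = mat 1"
      using arg_cong[OF Ppi(1), of transpose] Pps by (simp add: matrix_transpose_mul transpose_mat)
    then show ?thesis using left_inv_inv(2)[of "transpose Pi" Pp] unfolding Pi_def by simp
  qed
  have Ris: "transpose Ri = Ri"
  proof -
    have "transpose Ri ** R = mat 1"
      using arg_cong[OF Rri(1), of transpose] R(1) by (simp add: matrix_transpose_mul transpose_mat)
    then show ?thesis using left_inv_inv(2)[of "transpose Ri" R] unfolding Ri_def by simp
  qed
  have Js: "transpose J = J" unfolding J' M_def
    by (simp add: transpose_add matrix_transpose_mul Pis Ris matrix_mul_assoc)
  have Jpsd: "0 \<le> x \<bullet> (J *v x)" for x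
  proof -
    have a1: "x \<bullet> ((transpose H ** Ri ** H) *v x) = x \<bullet> (transpose H *v (Ri *v (H *v x)))"
      by (simp add: matrix_vector_mul_assoc matrix_mul_assoc)
    also have "\<dots> = (H *v x) \<bullet> (Ri *v (H *v x))" by (simp only: inner_mv transpose_transpose)
    finally have a2: "x \<bullet> ((transpose H ** Ri ** H) *v x) = (H *v x) \<bullet> (Ri *v (H *v x))" .
    have a: "x \<bullet> (J *v x) = x \<bullet> (Pi *v x) + (H *v x) \<bullet> (Ri *v (H *v x))"
      unfolding J' M_def a2[symmetric] by (simp add: matrix_vector_mult_add_rdistrib inner_add_right)
    have b: "0 \<le> x \<bullet> (Pi *v x)"
    proof -
      have "x \<bullet> (Pi *v x) = (Pp *v (Pi *v x)) \<bullet> (Pi *v x)" by (simp add: matrix_vector_mul_assoc Ppi)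
      also have "\<dots> = (Pi *v x) \<bullet> (Pp *v (Pi *v x))" by (simp add: inner_commute)
      finally show ?thesis using Pp(1) psd_cov_def by auto
    qed
    have c: "0 \<le> y \<bullet> (Ri *v y)" for y
    proof (cases "Ri *v y = 0")
      case True then show ?thesis by simp
    next
      case False
      have "y \<bullet> (Ri *v y) = (R *v (Ri *v y)) \<bullet> (Ri *v y)" by (simp add: matrix_vector_mul_assoc Rri)
      also have "\<dots> = (Ri *v y) \<bullet> (R *v (Ri *v y))" by (simp add: inner_commute)
      finally show ?thesis using R(2) False by (smt (verit))
    qed
    show ?thesis using a b c[of "H *v x"] by simp
  qed
  show "psd_cov P" using psd_inv[OF _ JP] Js Jpsd unfolding psd_cov_def by blast
qed

lemma polyb_sum: assumes "\<And>j. polyb (f j)" shows "polyb (\<lambda>x. \<Sum>j\<in>A. f j x)"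
proof (cases "finite A")
  case True then show ?thesis
    by (induction A rule: finite_induct) (simp_all add: assms)
qed simp

context expfam begin

lemma cov_eq: assumes "\<beta> \<in> NP" shows "ef_cov T lam (ef_mean T lam \<beta>) = Cm \<beta>"
  unfolding ef_cov_def Cm_def p_obs_def natparam_of_mean[OF assms] ..

lemma grad_ll:
  fixes hf :: "real^'n \<Rightarrow> real^'m"
  assumes "\<beta> \<in> NP" "(hf has_derivative Dh) (at x0)" "hf x0 = ef_mean T lam \<beta>"
  shows "grad (\<lambda>x. ln (p_obs T lam y' (hf x))) x0 = (T y' - ef_mean T lam \<beta>) v* (matrix_inv (Cm \<beta>) ** matrix Dh)"
proof -
  define m where "m = ef_mean T lam \<beta>"
  define Ci where "Ci = matrix_inv (Cm \<beta>)"
  have dl: "((\<lambda>yh. ln (p_obs T lam y' yh)) has_derivative (\<lambda>w. (T y' - m) \<bullet> (Ci *v w))) (at (hf x0))"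
    using lnp_deriv[OF assms(1)] unfolding assms(3) m_def Ci_def .
  have D: "((\<lambda>x. ln (p_obs T lam y' (hf x))) has_derivative (\<lambda>v. (T y' - m) \<bullet> (Ci *v Dh v))) (at x0)"
    using has_derivative_compose[OF assms(2) dl] .
  have fd: "frechet_derivative (\<lambda>x. ln (p_obs T lam y' (hf x))) (at x0) = (\<lambda>v. (T y' - m) \<bullet> (Ci *v Dh v))"
    using frechet_derivative_at[OF D] by simp
  have lin: "linear Dh" using has_derivative_linear[OF assms(2)] .
  have Dhm: "Dh v = matrix Dh *v v" for v using matrix_vector_mul(2)[OF lin] by metis
  show ?thesis
  proof (subst vec_eq_iff, intro allI)
    fix j
    have "grad (\<lambda>x. ln (p_obs T lam y' (hf x))) x0 $ j = (T y' - m) \<bullet> (Ci *v (matrix Dh *v axis j 1))"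
      unfolding grad_def fd by (simp add: Dhm[symmetric])
    also have "\<dots> = ((T y' - m) v* (Ci ** matrix Dh)) \<bullet> axis j 1"
      by (simp add: dot_lmul_matrix matrix_vector_mul_assoc)
    finally show "grad (\<lambda>x. ln (p_obs T lam y' (hf x))) x0 $ j = ((T y' - ef_mean T lam \<beta>) v* (matrix_inv (Cm \<beta>) ** matrix Dh)) $ j"
      unfolding m_def Ci_def by (simp add: inner_axis)
  qed
qed

lemma G_eq:
  fixes A :: "real^'n^'m"
  assumes "\<beta> \<in> NP"
  shows "(\<chi> i j. \<integral>y. p_obs T lam y (ef_mean T lam \<beta>) * (outer_sq ((T y - ef_mean T lam \<beta>) v* A) $ i $ j) \<partial>lam)
       = transpose A ** Cm \<beta> ** A"
proof (subst vec_eq_iff, intro allI, subst vec_eq_iff, intro allI)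
  fix i j
  define m where "m = ef_mean T lam \<beta>"
  have pw: "((x - m) v* A) $ i * ((x - m) v* A) $ j
      = (\<Sum>k\<in>UNIV. \<Sum>l\<in>UNIV. (A$k$i * A$l$j) *\<^sub>R ((x$k - m$k) * (x$l - m$l)))" for x
    by (simp add: vector_matrix_mult_def sum_product mult_ac)
  have "(\<integral>y. p_obs T lam y m * (outer_sq ((T y - m) v* A) $ i $ j) \<partial>lam)
      = Eb \<beta> (\<lambda>x. ((x - m) v* A) $ i * ((x - m) v* A) $ j)"
    unfolding Eb_def p_obs_def m_def natparam_of_mean[OF assms] outer_sq_def by simp
  also have "\<dots> = Eb \<beta> (\<lambda>x. \<Sum>k\<in>UNIV. \<Sum>l\<in>UNIV. (A$k$i * A$l$j) *\<^sub>R ((x$k - m$k) * (x$l - m$l)))"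
    unfolding pw ..
  also have "\<dots> = (\<Sum>k\<in>UNIV. Eb \<beta> (\<lambda>x. \<Sum>l\<in>UNIV. (A$k$i * A$l$j) *\<^sub>R ((x$k - m$k) * (x$l - m$l))))"
    by (rule Eb_sum[OF assms]) (intro polyb_sum, simp)
  also have "\<dots> = (\<Sum>k\<in>UNIV. \<Sum>l\<in>UNIV. (A$k$i * A$l$j) * Cm \<beta> $ k $ l)"
  proof -
    have Em: "Eb \<beta> (\<lambda>x. c * (g x::real)) = c * Eb \<beta> g" for c g using Eb_scale[of \<beta> c g] by simp
    show ?thesis by (simp add: Eb_sum[OF assms] Em Cm_Eb m_def)
  qed
  also have "\<dots> = (transpose A ** Cm \<beta> ** A) $ i $ j"
    apply (simp add: matrix_matrix_mult_def transpose_def sum_distrib_left sum_distrib_right mult_ac)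
    apply (subst sum.swap)
    apply (simp add: mult_ac)
    done
  finally show "(\<chi> i j. \<integral>y. p_obs T lam y (ef_mean T lam \<beta>) * (outer_sq ((T y - ef_mean T lam \<beta>) v* A) $ i $ j) \<partial>lam) $ i $ j
       = (transpose A ** Cm \<beta> ** A) $ i $ j" unfolding m_def by simp
qed

end

theorem corollary13:
  fixes f :: "real^'n \<Rightarrow> 'u \<Rightarrow> real^'n" and h :: "real^'n \<Rightarrow> 'u \<Rightarrow> real^'m"
    and T :: "'y \<Rightarrow> real^'m" and lam :: "'y measure"
    and Q :: "nat \<Rightarrow> real^'n^'n" and u :: "nat \<Rightarrow> 'u" and y :: "nat \<Rightarrow> 'y"
    and s0 :: "real^'n" and P0 :: "real^'n^'n"
  assumes fam: "exp_family T lam"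
    and f_diff: "\<forall>v x. (\<lambda>s. f s v) differentiable (at x)"
    and h_diff: "\<forall>v x. (\<lambda>s. h s v) differentiable (at x)"
    and P0_cov: "psd_cov P0"
    and Q_cov: "\<forall>t. psd_cov (Q t)"
    and yhat_valid: "\<forall>t. case ekf f h T lam Q u y s0 P0 t of (s, P) \<Rightarrow>
                        ekf_yhat f h u s (Suc t) \<in> ef_meanparams T lam"
    and Pp_inv: "\<forall>t. case ekf f h T lam Q u y s0 P0 t of (s, P) \<Rightarrow>
                        invertible (ekf_pred_cov f Q u s P (Suc t))"
    and R_inv: "\<forall>t. case ekf f h T lam Q u y s0 P0 t of (s, P) \<Rightarrow>
                        invertible (ef_cov T lam (ekf_yhat f h u s (Suc t)))"
  shows "\<forall>t. ekf_alt f h T lam Q u y s0 P0 t = ekf f h T lam Q u y s0 P0 t"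
proof -
  interpret expfam T lam using fam by unfold_locales
  have main: "ekf_alt f h T lam Q u y s0 P0 t = ekf f h T lam Q u y s0 P0 t \<and> psd_cov (snd (ekf f h T lam Q u y s0 P0 t))" for t
  proof (induction t)
    case 0
    then show ?case using P0_cov by simp
  next
    case (Suc t)
    obtain s P where sP: "ekf f h T lam Q u y s0 P0 t = (s, P)" by fastforce
    have aP: "ekf_alt f h T lam Q u y s0 P0 t = (s, P)" using Suc.IH sP by simp
    have Ppsd: "psd_cov P" using Suc.IH sP by simp
    define sp where "sp = ekf_pred_state f u s (Suc t)"
    define Pp where "Pp = ekf_pred_cov f Q u s P (Suc t)"
    define yh where "yh = h sp (u (Suc t))"
    define H where "H = jacobian (\<lambda>x. h x (u (Suc t))) sp"
    define R where "R = ef_cov T lam yh"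
    define K where "K = Pp ** transpose H ** matrix_inv (H ** Pp ** transpose H + R)"
    define ll where "ll = (\<lambda>y' x. ln (p_obs T lam y' (h x (u (Suc t)))))"
    define G where "G = (\<chi> i j. \<integral>y'. p_obs T lam y' yh * (outer_sq (grad (ll y') sp) $ i $ j) \<partial>lam)"
    have ekf_eq: "ekf f h T lam Q u y s0 P0 (Suc t) = (sp + K *v (T (y (Suc t)) - yh), (mat 1 - K ** H) ** Pp)"
      by (simp add: sP sp_def Pp_def yh_def H_def R_def K_def Let_def)
    have alt_eq: "ekf_alt f h T lam Q u y s0 P0 (Suc t)
        = (sp + matrix_inv (matrix_inv Pp + G) *v grad (ll (y (Suc t))) sp, matrix_inv (matrix_inv Pp + G))"
      by (simp add: aP sp_def Pp_def yh_def G_def ll_def Let_def)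
    have yhv: "yh \<in> ef_meanparams T lam"
      using yhat_valid sP unfolding yh_def sp_def ekf_yhat_def by (metis case_prod_conv)
    have Ppinv: "invertible Pp" using Pp_inv sP unfolding Pp_def by (metis case_prod_conv)
    have Pppsd: "psd_cov Pp" unfolding Pp_def ekf_pred_cov_def Let_def using psd_pred[OF Ppsd] Q_cov by blast
    define \<beta> where "\<beta> = ef_natparam_of T lam yh"
    have b: "\<beta> \<in> NP" and mb: "ef_mean T lam \<beta> = yh" using meanparam[OF yhv] unfolding \<beta>_def by auto
    have RC: "R = Cm \<beta>" unfolding R_def using cov_eq[OF b] mb by simp
    define Ci where "Ci = matrix_inv (Cm \<beta>)"
    have Cis: "transpose Ci = Ci" unfolding Ci_def by (rule Cinv_sym[OF b])
    have CCi: "Cm \<beta> ** Ci = mat 1" using inv_props2[OF Cm_invertible[OF b]] unfolding Ci_def by blast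
    define Dh where "Dh = frechet_derivative (\<lambda>x. h x (u (Suc t))) (at sp)"
    have dh: "((\<lambda>x. h x (u (Suc t))) has_derivative Dh) (at sp)"
      unfolding Dh_def using h_diff frechet_derivative_works by blast
    have HD: "H = matrix Dh" unfolding H_def jacobian_def Dh_def ..
    have gr: "grad (ll y') sp = (T y' - yh) v* (Ci ** H)" for y'
      unfolding ll_def HD Ci_def using grad_ll[OF b dh, of y'] mb yh_def by simp
    have GG: "G = transpose H ** matrix_inv R ** H"
    proof -
      have "G = transpose (Ci ** H) ** Cm \<beta> ** (Ci ** H)"
        unfolding G_def gr using G_eq[OF b, of "Ci ** H"] mb by simp
      also have "\<dots> = transpose H ** (transpose Ci ** Cm \<beta> ** Ci) ** H"
        by (simp add: matrix_transpose_mul matrix_mul_assoc)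
      also have "transpose Ci ** Cm \<beta> ** Ci = Ci"
        using CCi Cis by (simp add: matrix_mul_assoc[symmetric])
      also have "transpose H ** Ci ** H = transpose H ** matrix_inv R ** H" unfolding RC Ci_def ..
      finally show ?thesis .
    qed
    have Rsym: "transpose R = R" unfolding RC by (rule Cm_sym)
    have Rpd: "\<forall>x. x \<noteq> 0 \<longrightarrow> 0 < x \<bullet> (R *v x)" unfolding RC using Cm_Cv[OF b] Cv_pos[OF b] by simp
    note KI = kalman_info[OF Pppsd Ppinv Rsym Rpd, of H]
    have Pe: "matrix_inv (matrix_inv Pp + G) = (mat 1 - K ** H) ** Pp"
      unfolding GG K_def using KI(1) by simp
    have Ke: "K = (mat 1 - K ** H) ** Pp ** transpose H ** matrix_inv R"
      unfolding K_def using KI(2) by simp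
    have Ppsd': "psd_cov ((mat 1 - K ** H) ** Pp)" unfolding K_def using KI(3) by simp
    have se: "matrix_inv (matrix_inv Pp + G) *v grad (ll (y (Suc t))) sp = K *v (T (y (Suc t)) - yh)"
    proof -
      have "grad (ll (y (Suc t))) sp = transpose H *v (Ci *v (T (y (Suc t)) - yh))"
        unfolding gr by (simp add: transpose_matrix_vector[symmetric] matrix_transpose_mul Cis matrix_vector_mul_assoc)
      moreover have "K *v (T (y (Suc t)) - yh) = ((mat 1 - K ** H) ** Pp ** transpose H ** matrix_inv R) *v (T (y (Suc t)) - yh)"
        using Ke by (rule arg_cong[where f="\<lambda>A. A *v (T (y (Suc t)) - yh)"])
      ultimately show ?thesis unfolding Pe
        by (simp add: matrix_vector_mul_assoc RC Ci_def matrix_mul_assoc)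
    qed
    show ?case using ekf_eq alt_eq Pe se Ppsd' by simp
  qed
  then show ?thesis by blast
qed

end
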